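(* Let $n\ge k\ge 4$ be integers and let $Q_1$ be the unicyclic graph on $k$ vertices consisting of a $4$-cycle $v_1v_2v_3v_4v_1$ together with $k-4$ further vertices, each adjacent (only) to $v_1$. Regard $Q_1$ as a subgraph of $K_n$ and let $\Gamma=(K_n,Q_1^-)$. Then, with $u=n-k$, $$\varphi(\Gamma,\lambda)=(\lambda+1)^{n-5}\Big(\lambda^5+(5-n)\lambda^4+(10-4n)\lambda^3+(12k-6n+4ku-38)\lambda^2+(24k-4n+8ku-91)\lambda+127n-116k-28ku-47\Big).$$
   Context: A signed graph is a pair $(G,\sigma)$ with $\sigma:E(G)\to\{+,-\}$; its adjacency matrix $A$ has $(i,j)$-entry $\sigma(v_iv_j)$ if $v_iv_j\in E(G)$ and $0$ otherwise. For a subgraph $H$ of $K_n$, $(K_n,H^-)$ denotes the signed complete graph on $n$ vertices whose negative edges are exactly the edges of $H$ and all other edges are positive. $\varphi(\Gamma,\lambda)=\det(\lambda I-A(\Gamma))$ is the characteristic polynomial. *)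

theory Defs
  imports "Jordan_Normal_Form.Char_Poly"
begin

text \<open>Vertices of K_n are 0,...,n-1. The copy of Q_1 in K_n: the 4-cycle
  v1 v2 v3 v4 v1 is 0-1-2-3-0, and the k-4 pendant vertices 4,...,k-1 are adjacent to 0.\<close>

definition Q1_edge :: "nat \<Rightarrow> nat \<Rightarrow> nat \<Rightarrow> bool" where
  "Q1_edge k i j \<longleftrightarrow>
     {i, j} = {0, 1} \<or> {i, j} = {1, 2} \<or> {i, j} = {2, 3} \<or> {i, j} = {3, 0} \<or>
     (\<exists>m. 4 \<le> m \<and> m < k \<and> {i, j} = {0, m})"

definition signed_KQ1_adj :: "nat \<Rightarrow> nat \<Rightarrow> int mat" where
  "signed_KQ1_adj n k = mat n n (\<lambda>(i, j).
     if i = j then 0 else if Q1_edge k i j then -1 else 1)"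

end

theory Submission imports Defs begin

lemma twin_last:
  fixes M :: "'a::comm_ring_1 mat"
  assumes M: "M \<in> carrier_mat (Suc (Suc m)) (Suc (Suc m))"
  and col: "\<And>i. i<m \<Longrightarrow> M$$(i,m) = M$$(i,Suc m)"
  and row: "\<And>j. j<m \<Longrightarrow> M$$(m,j) = M$$(Suc m,j)"
  and d1: "M$$(m,m) = a" and d2: "M$$(Suc m,Suc m) = a"
  and o1: "M$$(m,Suc m) = b" and o2: "M$$(Suc m,m) = b"
  shows "det M = (a-b) * (2 * det (mat (Suc m) (Suc m) (\<lambda>(i,j). M$$(i,j)))
                         - (a-b) * det (mat m m (\<lambda>(i,j). M$$(i,j))))"
proof -
  define M1 where "M1 = addrow (-1) m (Suc m) M"
  define M2 where "M2 = addcol 1 (Suc m) m M1"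
  have c1: "M1 \<in> carrier_mat (Suc (Suc m)) (Suc (Suc m))" using M unfolding M1_def by auto
  have c2: "M2 \<in> carrier_mat (Suc (Suc m)) (Suc (Suc m))" using c1 unfolding M2_def by auto
  have "det M1 = det M" unfolding M1_def by (rule det_addrow[OF _ _ M], auto)
  moreover have "det M2 = det M1" unfolding M2_def by (rule det_addcol[OF _ _ c1], auto)
  ultimately have e1: "det M = det M2" by simp
  have M2e: "M2 $$ (i,j) = (if j = Suc m then M1$$(i,m) + M1$$(i,j) else M1$$(i,j))"
    if "i < Suc (Suc m)" "j < Suc (Suc m)" for i j
    using that c1 unfolding M2_def mat_addcol_def by auto
  have M1e: "M1 $$ (i,j) = (if i = m then M$$(i,j) - M$$(Suc m, j) else M$$(i,j))"
    if "i < Suc (Suc m)" "j < Suc (Suc m)" for i j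
    using that M unfolding M1_def mat_addrow_def by auto
  have rowm: "M2 $$ (m,j) = (if j = m then a - b else 0)" if "j < Suc (Suc m)" for j
  proof -
    have "j < m \<or> j = m \<or> j = Suc m" using that by auto
    moreover have ?thesis if "j < m" using M2e[of m j] M1e[of m j] that row[of j] by simp
    moreover have ?thesis if "j = m" using M2e[of m j] M1e[of m j] that d1 o2 by simp
    moreover have ?thesis if "j = Suc m" using M2e[of m j] M1e[of m j] M1e[of m m] that d1 d2 o1 o2 by simp
    ultimately show ?thesis by blast
  qed
  have "det M2 = (\<Sum>j<Suc (Suc m). M2 $$ (m,j) * cofactor M2 m j)"
    by (rule laplace_expansion_row[OF c2], simp)
  also have "\<dots> = (\<Sum>j<Suc (Suc m). if j = m then (a-b) * cofactor M2 m m else 0)"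
    by (rule sum.cong, auto simp: rowm)
  also have "\<dots> = (a-b) * det (mat_delete M2 m m)"
    by (simp add: cofactor_def)
  finally have e2: "det M2 = (a-b) * det (mat_delete M2 m m)" .
  define N where "N = mat_delete M2 m m"
  define S where "S = mat (Suc m) (Suc m) (\<lambda>(i,j). M$$(i,j))"
  have cN: "N \<in> carrier_mat (Suc m) (Suc m)" using c2 unfolding N_def mat_delete_def by auto
  have cS: "S \<in> carrier_mat (Suc m) (Suc m)" unfolding S_def by auto
  have rowS: "M$$(Suc (Suc i), j) = M$$(Suc i, j)" if "j<m" "\<not> Suc i < m" "i < m" for i j
  proof -
    have "Suc i = m" using that by auto
    then show ?thesis using row[OF that(1)] by simp
  qed
  have delS: "mat_delete N i m = mat_delete S i m" if "i < Suc m" for i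
    by (rule eq_matI, insert that c2 M, auto simp: N_def S_def mat_delete_def M2e M1e rowS)
  have Nlast: "N $$ (i,m) = (if i = m then a + b else 2 * S $$ (i,m))" if "i < Suc m" for i
    using that c2 M d1 d2 o1 o2 col by (auto simp: N_def S_def mat_delete_def M2e M1e)
  have Slast: "S $$ (m,m) = a" using d1 by (simp add: S_def)
  have "det N = (\<Sum>i<Suc m. N $$ (i,m) * cofactor N i m)"
    by (rule laplace_expansion_column[OF cN], simp)
  also have "\<dots> = (\<Sum>i<Suc m. 2 * (S $$ (i,m) * cofactor S i m)) + (b - a) * cofactor S m m"
    by (simp add: Nlast delS cofactor_def Slast algebra_simps)
  also have "(\<Sum>i<Suc m. 2 * (S $$ (i,m) * cofactor S i m)) = 2 * det S"
    by (simp add: laplace_expansion_column[OF cS, of m] sum_distrib_left)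
  also have "cofactor S m m = det (mat m m (\<lambda>(i,j). M$$(i,j)))"
    unfolding cofactor_def 
    by (simp, rule arg_cong[where f=det], rule eq_matI, auto simp: S_def mat_delete_def)
  finally have eN: "det N = 2 * det S + (b - a) * det (mat m m (\<lambda>(i,j). M$$(i,j)))" .
  have "det M = (a-b) * det N" using e1 e2 unfolding N_def by simp
  also have "\<dots> = (a-b) * (2 * det S - (a-b) * det (mat m m (\<lambda>(i,j). M$$(i,j))))"
    unfolding eN by (simp add: algebra_simps)
  finally show ?thesis unfolding S_def .
qed

definition Wc :: "nat \<Rightarrow> nat \<Rightarrow> int" where
  "Wc a b = (if {a,b} = {0,1} \<or> {a,b} = {1,2} \<or> {a,b} = {0,3} then 1 else -1)"

definition KM :: "int \<Rightarrow> (nat \<Rightarrow> nat) \<Rightarrow> nat \<Rightarrow> int mat" where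
  "KM x c m = mat m m (\<lambda>(i,j). if i = j then x else Wc (c i) (c j))"

lemma Wc_same[simp]: "Wc a a = -1"
  unfolding Wc_def by (auto simp: doubleton_eq_iff)

lemma twin_KM:
  assumes "c m = c (Suc m)"
  shows "det (KM x c (Suc (Suc m))) = (x+1) * (2 * det (KM x c (Suc m)) - (x+1) * det (KM x c m))"
proof -
  have "det (KM x c (Suc (Suc m))) = (x - (-1)) * (2 * det (mat (Suc m) (Suc m) (\<lambda>(i,j). KM x c (Suc (Suc m)) $$(i,j)))
                         - (x - (-1)) * det (mat m m (\<lambda>(i,j). KM x c (Suc (Suc m))$$(i,j))))"
    by (rule twin_last, insert assms, auto simp: KM_def)
  also have "mat (Suc m) (Suc m) (\<lambda>(i,j). KM x c (Suc (Suc m)) $$(i,j)) = KM x c (Suc m)"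
    by (rule eq_matI, auto simp: KM_def)
  also have "mat m m (\<lambda>(i,j). KM x c (Suc (Suc m)) $$(i,j)) = KM x c m"
    by (rule eq_matI, auto simp: KM_def)
  finally show ?thesis by simp
qed

lemma det_perm_sim:
  fixes B :: "'a::comm_ring_1 mat"
  assumes B: "B \<in> carrier_mat m m" and p: "p permutes {0..<m}"
  shows "det (mat m m (\<lambda>(i,j). B $$ (p i, p j))) = det B"
proof -
  define C where "C = mat m m (\<lambda>(i,j). B $$ (p i, j))"
  have cC: "C \<in> carrier_mat m m" unfolding C_def by auto
  have dC: "det C = signof p * det B" unfolding C_def by (rule det_permute_rows[OF B p])
  have "det (mat m m (\<lambda>(i,j). B $$ (p i, p j))) = det ((mat m m (\<lambda>(i,j). B $$ (p i, p j)))\<^sup>T)"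
    by (rule det_transpose[symmetric], auto)
  also have "(mat m m (\<lambda>(i,j). B $$ (p i, p j)))\<^sup>T = mat m m (\<lambda>(i,j). C\<^sup>T $$ (p i, j))"
    by (rule eq_matI, insert p, auto simp: C_def permutes_in_image)
  also have "det \<dots> = signof p * det C\<^sup>T" by (rule det_permute_rows[OF _ p], insert cC, auto)
  also have "det C\<^sup>T = det C" by (rule det_transpose[OF cC])
  finally have "det (mat m m (\<lambda>(i,j). B $$ (p i, p j))) = signof p * signof p * det B" using dC by simp
  moreover have "signof p * signof p = (1::'a)"
    by (simp add: sign_def)
  ultimately show ?thesis by simp
qed

lemma det_mat_Suc:
  fixes f :: "nat \<times> nat \<Rightarrow> 'a::comm_ring_1"
  shows "det (mat (Suc n) (Suc n) f) = (\<Sum>j<Suc n. (-1)^j * f (0,j) *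
     det (mat n n (\<lambda>(i,l). f (Suc i, if l < j then l else Suc l))))"
proof -
  have "det (mat (Suc n) (Suc n) f) = (\<Sum>j<Suc n. mat (Suc n) (Suc n) f $$ (0,j) * cofactor (mat (Suc n) (Suc n) f) 0 j)"
    by (rule laplace_expansion_row, auto)
  also have "\<dots> = (\<Sum>j<Suc n. (-1)^j * f (0,j) *
     det (mat n n (\<lambda>(i,l). f (Suc i, if l < j then l else Suc l))))"
  proof (rule sum.cong[OF refl])
    fix j assume "j \<in> {..<Suc n}"
    have "mat_delete (mat (Suc n) (Suc n) f) 0 j = mat n n (\<lambda>(i,l). f (Suc i, if l < j then l else Suc l))"
      by (rule eq_matI, auto simp: mat_delete_def)
    then show "mat (Suc n) (Suc n) f $$ (0,j) * cofactor (mat (Suc n) (Suc n) f) 0 j = (-1)^j * f (0,j) *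
     det (mat n n (\<lambda>(i,l). f (Suc i, if l < j then l else Suc l)))"
      using \<open>j \<in> {..<Suc n}\<close> by (simp add: cofactor_def)
  qed
  finally show ?thesis .
qed

definition clsR :: "nat \<Rightarrow> nat \<Rightarrow> nat" where
  "clsR u i = (if i = 0 then 0 else if i = 1 \<or> i = 3 then 1 else if i = 2 then 2 else if i < 4 + u then 4 else 3)"

lemma det0: "det (mat 0 0 f) = 1" by (rule det_dim_zero, auto)

lemma b00: "det (KM x (clsR 0) 4) = x^4 - 6*x^2 - 8*x - 3"
proof -
  have "KM x (clsR 0) 4 = mat 4 4 (\<lambda>(i,j). [[x,1,-1,1],[1,x,1,-1],[-1,1,x,1],[1,-1,1,x::int]] ! i ! j)"
    by (rule eq_matI, auto simp: KM_def clsR_def Wc_def doubleton_eq_iff eval_nat_numeral less_Suc_eq)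
  also have "det \<dots> = x^4 - 6*x^2 - 8*x - 3"
    apply (simp only: eval_nat_numeral BitM.simps numeral_One)
    apply (simp only: det_mat_Suc sum.lessThan_Suc lessThan_0 sum.empty det0)
    apply (simp only: split  if_True if_False nat.simps not_less0 Suc_less_eq zero_less_Suc nth_Cons_0 nth_Cons_Suc power_0 power_Suc)
    apply (simp add: algebra_simps)
    done
  finally show ?thesis .
qed

lemma b01: "det (KM x (clsR 0) 5) = x^5 - 10*x^3 - 8*x^2 + 9*x + 8"
proof -
  have "KM x (clsR 0) 5 = mat 5 5 (\<lambda>(i,j). [[x,1,-1,1,1],[1,x,1,-1,-1],[-1,1,x,1,-1],[1,-1,1,x,-1],[1,-1,-1,-1,x::int]] ! i ! j)"
    by (rule eq_matI, auto simp: KM_def clsR_def Wc_def doubleton_eq_iff eval_nat_numeral less_Suc_eq)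
  also have "det \<dots> = x^5 - 10*x^3 - 8*x^2 + 9*x + 8"
    apply (simp only: eval_nat_numeral BitM.simps numeral_One)
    apply (simp only: det_mat_Suc sum.lessThan_Suc lessThan_0 sum.empty det0)
    apply (simp only: split  if_True if_False nat.simps not_less0 Suc_less_eq zero_less_Suc nth_Cons_0 nth_Cons_Suc power_0 power_Suc)
    apply (simp add: algebra_simps)
    done
  finally show ?thesis .
qed

lemma b10: "det (KM x (clsR 1) 5) = x^5 - 10*x^3 - 4*x^2 + 17*x + 12"
proof -
  have "KM x (clsR 1) 5 = mat 5 5 (\<lambda>(i,j). [[x,1,-1,1,-1],[1,x,1,-1,-1],[-1,1,x,1,-1],[1,-1,1,x,-1],[-1,-1,-1,-1,x::int]] ! i ! j)"
    by (rule eq_matI, auto simp: KM_def clsR_def Wc_def doubleton_eq_iff eval_nat_numeral less_Suc_eq)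
  also have "det \<dots> = x^5 - 10*x^3 - 4*x^2 + 17*x + 12"
    apply (simp only: eval_nat_numeral BitM.simps numeral_One)
    apply (simp only: det_mat_Suc sum.lessThan_Suc lessThan_0 sum.empty det0)
    apply (simp only: split  if_True if_False nat.simps not_less0 Suc_less_eq zero_less_Suc nth_Cons_0 nth_Cons_Suc power_0 power_Suc)
    apply (simp add: algebra_simps)
    done
  finally show ?thesis .
qed

lemma b11: "det (KM x (clsR 1) 6) = x^6 - 15*x^4 - 8*x^3 + 51*x^2 + 40*x - 5"
proof -
  have "KM x (clsR 1) 6 = mat 6 6 (\<lambda>(i,j). [[x,1,-1,1,-1,1],[1,x,1,-1,-1,-1],[-1,1,x,1,-1,-1],[1,-1,1,x,-1,-1],[-1,-1,-1,-1,x,-1],[1,-1,-1,-1,-1,x::int]] ! i ! j)"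
    by (rule eq_matI, auto simp: KM_def clsR_def Wc_def doubleton_eq_iff eval_nat_numeral less_Suc_eq)
  also have "det \<dots> = x^6 - 15*x^4 - 8*x^3 + 51*x^2 + 40*x - 5"
    apply (simp only: eval_nat_numeral BitM.simps numeral_One)
    apply (simp only: det_mat_Suc sum.lessThan_Suc lessThan_0 sum.empty det0)
    apply (simp only: split  if_True if_False nat.simps not_less0 Suc_less_eq zero_less_Suc nth_Cons_0 nth_Cons_Suc power_0 power_Suc)
    apply (simp add: algebra_simps)
    done
  finally show ?thesis .
qed


definition fq :: "int \<Rightarrow> int \<Rightarrow> int \<Rightarrow> int" where
  "fq x n k = x^5 + (5 - n) * x^4 + (10 - 4*n) * x^3 + (12*k - 6*n + 4*k*(n-k) - 38) * x^2
     + (24*k - 4*n + 8*k*(n-k) - 91) * x + (127*n - 116*k - 28*k*(n-k) - 47)"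

lemma G_base:
  assumes "u \<le> 1" "p \<le> 1"
  shows "(x+1)^5 * det (KM x (clsR u) (4+u+p)) = (x+1)^(4+u+p) * fq x (int (4+u+p)) (int (4+p))"
proof -
  have e00: "(x+1)^5 * det (KM x (clsR 0) 4) = (x+1)^4 * fq x 4 4"
    unfolding b00 fq_def by (simp add: eval_nat_numeral algebra_simps)
  have e01: "(x+1)^5 * det (KM x (clsR 0) 5) = (x+1)^5 * fq x 5 5"
    unfolding b01 fq_def by (simp add: eval_nat_numeral algebra_simps)
  have e10: "(x+1)^5 * det (KM x (clsR 1) 5) = (x+1)^5 * fq x 5 4"
    unfolding b10 fq_def by (simp add: eval_nat_numeral algebra_simps)
  have e11: "(x+1)^5 * det (KM x (clsR 1) 6) = (x+1)^6 * fq x 6 5"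
    unfolding b11 fq_def by (simp add: eval_nat_numeral algebra_simps)
  have "(u = 0 \<or> u = 1) \<and> (p = 0 \<or> p = 1)" using assms by auto
  then show ?thesis
  proof (elim conjE disjE)
    assume "u = 0" "p = 0" then show ?thesis using e00 by simp
  next
    assume "u = 0" "p = 1" then show ?thesis using e01 by simp
  next
    assume "u = 1" "p = 0" then show ?thesis using e10 by simp
  next
    assume "u = 1" "p = 1" then show ?thesis using e11 by simp
  qed
qed

lemma G_all:
  assumes "u \<le> 1"
  shows "(x+1)^5 * det (KM x (clsR u) (4+u+p)) = (x+1)^(4+u+p) * fq x (int (4+u+p)) (int (4+p))"
proof -
  let ?P = "\<lambda>p. (x+1)^5 * det (KM x (clsR u) (4+u+p)) = (x+1)^(4+u+p) * fq x (int (4+u+p)) (int (4+p))"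
  have "?P p \<and> ?P (Suc p)"
  proof (induction p)
    case 0
    then show ?case using G_base[OF assms, of 0] G_base[OF assms, of 1] by simp
  next
    case (Suc p)
    define m where "m = 4+u+p"
    have cm: "clsR u m = clsR u (Suc m)" unfolding m_def clsR_def by auto
    have tw: "det (KM x (clsR u) (Suc (Suc m))) = (x+1) * (2 * det (KM x (clsR u) (Suc m)) - (x+1) * det (KM x (clsR u) m))"
      by (rule twin_KM[OF cm])
    have h0: "(x+1)^5 * det (KM x (clsR u) m) = (x+1)^m * fq x (int m) (int (4+p))"
      using Suc.IH unfolding m_def by simp
    have h1: "(x+1)^5 * det (KM x (clsR u) (Suc m)) = (x+1)^(Suc m) * fq x (int (Suc m)) (int (5+p))"
      using Suc.IH unfolding m_def by simp
    have lin: "fq x (int m + 2) (int (4+p) + 2) = 2 * fq x (int m + 1) (int (4+p) + 1) - fq x (int m) (int (4+p))"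
      unfolding fq_def by (simp add: algebra_simps power2_eq_square)
    have "(x+1)^5 * det (KM x (clsR u) (Suc (Suc m))) =
       (x+1) * (2 * ((x+1)^5 * det (KM x (clsR u) (Suc m))) - (x+1) * ((x+1)^5 * det (KM x (clsR u) m)))"
      unfolding tw by (simp add: algebra_simps)
    also have "\<dots> = (x+1)^(Suc (Suc m)) * (2 * fq x (int m + 1) (int (4+p) + 1) - fq x (int m) (int (4+p)))"
      unfolding h0 h1 by (simp add: algebra_simps)
    also have "\<dots> = (x+1)^(Suc (Suc m)) * fq x (int m + 2) (int (4+p) + 2)" using lin by simp
    finally have "?P (Suc (Suc p))" unfolding m_def by (simp add: add_ac)
    then show ?case using Suc.IH by simp
  qed
  then show ?thesis by simp
qed

definition cls :: "nat \<Rightarrow> nat \<Rightarrow> nat" where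
  "cls k i = (if i = 0 then 0 else if i = 1 \<or> i = 3 then 1 else if i = 2 then 2 else if i < k then 3 else 4)"

lemma perm_step:
  assumes k: "4 \<le> k"
  shows "det (KM x (cls k) (k+u)) = det (KM x (clsR u) (4+u+(k-4)))"
proof -
  define n where "n = k+u"
  define \<sigma> where "\<sigma> = (\<lambda>i::nat. if i < 4 then i else if i < k then i + u else if i < k+u then i - (k-4) else i)"
  have inj: "inj_on \<sigma> {0..<n}" unfolding inj_on_def \<sigma>_def n_def using k by auto
  have img: "\<sigma> ` {0..<n} \<subseteq> {0..<n}" unfolding \<sigma>_def n_def using k by auto
  have bij: "bij_betw \<sigma> {0..<n} {0..<n}" 
    unfolding bij_betw_def using inj endo_inj_surj[OF _ img inj] by auto
  have perm: "\<sigma> permutes {0..<n}"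
    by (rule bij_imp_permutes[OF bij], auto simp: \<sigma>_def n_def)
  have lt: "\<sigma> i < n" if "i < n" for i using img that by force
  have eqv: "\<sigma> i = \<sigma> j \<longleftrightarrow> i = j" if "i < n" "j < n" for i j
    using inj that unfolding inj_on_def by auto
  have cl: "cls k i = clsR u (\<sigma> i)" if "i < n" for i
    using that k unfolding cls_def clsR_def \<sigma>_def n_def by auto
  have "KM x (cls k) n = mat n n (\<lambda>(i,j). KM x (clsR u) n $$ (\<sigma> i, \<sigma> j))"
    by (rule eq_matI, auto simp: KM_def lt eqv cl)
  also have "det \<dots> = det (KM x (clsR u) n)"
    by (rule det_perm_sim[OF _ perm], simp add: KM_def)
  finally show ?thesis unfolding n_def using k by (simp add: add_ac)
qed

lemma E_all:
  assumes k: "4 \<le> k"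
  shows "(x+1)^5 * det (KM x (cls k) (k+u)) = (x+1)^(k+u) * fq x (int (k+u)) (int k)"
proof -
  let ?P = "\<lambda>u. (x+1)^5 * det (KM x (cls k) (k+u)) = (x+1)^(k+u) * fq x (int (k+u)) (int k)"
  have base: "?P u" if "u \<le> 1" for u
  proof -
    have e: "4+u+(k-4) = k+u" "int (4 + (k-4)) = int k" using k by auto
    show ?thesis using G_all[OF that, where p="k-4" and x=x] unfolding perm_step[OF k] e by simp
  qed
  have "?P u \<and> ?P (Suc u)"
  proof (induction u)
    case 0
    then show ?case using base[of 0] base[of 1] by simp
  next
    case (Suc u)
    define m where "m = k+u"
    have cm: "cls k m = cls k (Suc m)" unfolding m_def cls_def using k by auto
    have tw: "det (KM x (cls k) (Suc (Suc m))) = (x+1) * (2 * det (KM x (cls k) (Suc m)) - (x+1) * det (KM x (cls k) m))"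
      by (rule twin_KM[OF cm])
    have h0: "(x+1)^5 * det (KM x (cls k) m) = (x+1)^m * fq x (int m) (int k)"
      using Suc.IH unfolding m_def by simp
    have h1: "(x+1)^5 * det (KM x (cls k) (Suc m)) = (x+1)^(Suc m) * fq x (int m + 1) (int k)"
      using Suc.IH unfolding m_def by (simp add: ac_simps)
    have lin: "fq x (int m + 2) (int k) = 2 * fq x (int m + 1) (int k) - fq x (int m) (int k)"
      unfolding fq_def by (simp add: algebra_simps power2_eq_square)
    have "(x+1)^5 * det (KM x (cls k) (Suc (Suc m))) =
       (x+1) * (2 * ((x+1)^5 * det (KM x (cls k) (Suc m))) - (x+1) * ((x+1)^5 * det (KM x (cls k) m)))"
      unfolding tw by (simp add: algebra_simps)
    also have "\<dots> = (x+1)^(Suc (Suc m)) * (2 * fq x (int m + 1) (int k) - fq x (int m) (int k))"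
      unfolding h0 h1 by (simp add: algebra_simps)
    also have "\<dots> = (x+1)^(Suc (Suc m)) * fq x (int m + 2) (int k)" using lin by simp
    finally have "?P (Suc (Suc u))" unfolding m_def by (simp add: add_ac)
    then show ?case using Suc.IH by simp
  qed
  then show ?thesis by simp
qed

lemma Q1_Wc:
  assumes "i \<noteq> j"
  shows "(if Q1_edge k i j then 1 else -1) = Wc (cls k i) (cls k j)"
  using assms unfolding Q1_edge_def Wc_def cls_def by (auto simp: doubleton_eq_iff)

lemma poly_char:
  "poly (char_poly (signed_KQ1_adj n k)) x = det (KM x (cls k) n)"
proof -
  have A: "signed_KQ1_adj n k \<in> carrier_mat n n" unfolding signed_KQ1_adj_def by simp
  show ?thesis unfolding char_poly_def
  proof (rule poly_det_cong[of _ n])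
    show "KM x (cls k) n \<in> carrier_mat n n" unfolding KM_def by simp
    show "char_poly_matrix (signed_KQ1_adj n k) \<in> carrier_mat n n" using A by simp
    fix i j assume ij: "i < n" "j < n"
    show "poly (char_poly_matrix (signed_KQ1_adj n k) $$ (i, j)) x = KM x (cls k) n $$ (i, j)"
    proof (cases "i = j")
      case True
      then show ?thesis using ij A by (simp add: char_poly_matrix_def KM_def signed_KQ1_adj_def)
    next
      case False
      then show ?thesis using ij A Q1_Wc[OF False, of k, symmetric]
        by (simp add: char_poly_matrix_def KM_def signed_KQ1_adj_def)
    qed
  qed
qed

theorem lemma3p1:
  fixes n k :: nat
  assumes "4 \<le> k" and "k \<le> n"
  defines "u \<equiv> int n - int k"
  shows "[:1, 1:] ^ 5 * char_poly (signed_KQ1_adj n k) =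
         [:1, 1:] ^ n *
         [: 127 * int n - 116 * int k - 28 * int k * u - 47,
            24 * int k - 4 * int n + 8 * int k * u - 91,
            12 * int k - 6 * int n + 4 * int k * u - 38,
            10 - 4 * int n,
            5 - int n,
            1 :]"
proof -
  obtain v where v: "n = k + v" using assms(2) le_Suc_ex by blast
  have "poly ([:1, 1:] ^ 5 * char_poly (signed_KQ1_adj n k)) x =
        poly ([:1, 1:] ^ n *
         [: 127 * int n - 116 * int k - 28 * int k * u - 47,
            24 * int k - 4 * int n + 8 * int k * u - 91,
            12 * int k - 6 * int n + 4 * int k * u - 38,
            10 - 4 * int n,
            5 - int n,
            1 :]) x" for x
  proof -
    have "poly ([:1, 1:] ^ 5 * char_poly (signed_KQ1_adj n k)) x = (x+1)^5 * det (KM x (cls k) (k+v))"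
      by (simp add: poly_char v add_ac)
    also have "\<dots> = (x+1)^n * fq x (int n) (int k)" using E_all[OF assms(1), of x v] v by simp
    also have "\<dots> = poly ([:1, 1:] ^ n *
         [: 127 * int n - 116 * int k - 28 * int k * u - 47,
            24 * int k - 4 * int n + 8 * int k * u - 91,
            12 * int k - 6 * int n + 4 * int k * u - 38,
            10 - 4 * int n,
            5 - int n,
            1 :]) x"
      by (simp add: fq_def u_def poly_power eval_nat_numeral; simp add: algebra_simps)
    finally show ?thesis .
  qed
  then show ?thesis using poly_eq_poly_eq_iff by blast
qed

end
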